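(* Let $F=\{f_i\}_{i=1}^N$ be a tight frame for an $n$-dimensional Hilbert space $\mathcal{H}_n$ and let $p>1$. If $S_F^{-1}F\in\zeta_{\mathcal{N}}^{(1),p}(F)$, then $S_F^{-1}F\in\zeta_{\mathfrak{F}}^{(1),p}(F)$.
   Context: $F$ is tight if $\sum_i|\langle f,f_i\rangle|^2=A\|f\|^2$ for all $f$ and some $A>0$; $S_F$ is the frame operator $S_Ff=\sum_i\langle f,f_i\rangle f_i$ and $S_F^{-1}F=\{S_F^{-1}f_i\}$ the canonical dual. $G=\{g_i\}$ is a dual of $F$ if $f=\sum_i\langle f,f_i\rangle g_i$ for all $f$. For a dual $G$: $\mathrm{AE}_{\mathfrak{F}}^{(1),p}(F,G)=\{\frac1N\sum_i(\|f_i\|\|g_i\|)^p\}^{1/p}$ (the $\ell^p$-average of Frobenius norms of the one-erasure error operators $f\mapsto\langle f,f_i\rangle g_i$), and $\mathrm{AE}_{\mathcal{N}}^{(1),p}(F,G)=\{\frac1N\sum_i\omega(E_i)^p\}^{1/p}$ where $E_if=\langle f,f_i\rangle g_i$ and $\omega(T)=\sup_{\|f\|=1}|\langle Tf,f\rangle|$ is the numerical radius (so $\omega(E_i)=\frac{|\langle f_i,g_i\rangle|+\|f_i\|\|g_i\|}{2}$). $\zeta_{\mathfrak{F}}^{(1),p}(F)$ (resp. $\zeta_{\mathcal{N}}^{(1),p}(F)$) is the set of duals of $F$ minimizing $\mathrm{AE}_{\mathfrak{F}}^{(1),p}(F,\cdot)$ (resp. $\mathrm{AE}_{\mathcal{N}}^{(1),p}(F,\cdot)$)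 over all duals. *)

theory Defs
  imports "HOL-Analysis.Analysis"
begin

text \<open>The n-dimensional (complex) Hilbert space H_n is modelled as complex ^ 'n,
  with 'n a finite index type (n = CARD('n)). The norm is the library's Euclidean
  norm on complex ^ 'n, which is induced by the inner product cinner below.
  A finite family F = {f_i}, i = 1..N, is a function f :: nat => complex ^ 'n
  on the indices {..<N}.\<close>

definition cinner :: "complex ^ 'n \<Rightarrow> complex ^ 'n \<Rightarrow> complex" where
  "cinner x y = (\<Sum>j\<in>UNIV. x $ j * cnj (y $ j))"

definition tight_frame :: "nat \<Rightarrow> (nat \<Rightarrow> complex ^ 'n) \<Rightarrow> bool" where
  "tight_frame N f \<longleftrightarrow>
     (\<exists>A>0. \<forall>x. (\<Sum>i<N. (cmod (cinner x (f i)))\<^sup>2) = A * (norm x)\<^sup>2)"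

definition frame_op :: "nat \<Rightarrow> (nat \<Rightarrow> complex ^ 'n) \<Rightarrow> complex ^ 'n \<Rightarrow> complex ^ 'n" where
  "frame_op N f x = (\<Sum>i<N. cinner x (f i) *s f i)"

definition canonical_dual :: "nat \<Rightarrow> (nat \<Rightarrow> complex ^ 'n) \<Rightarrow> nat \<Rightarrow> complex ^ 'n" where
  "canonical_dual N f i = inv (frame_op N f) (f i)"

definition is_dual :: "nat \<Rightarrow> (nat \<Rightarrow> complex ^ 'n) \<Rightarrow> (nat \<Rightarrow> complex ^ 'n) \<Rightarrow> bool" where
  "is_dual N f g \<longleftrightarrow> (\<forall>x. x = (\<Sum>i<N. cinner x (f i) *s g i))"

definition erasure_op :: "(nat \<Rightarrow> complex ^ 'n) \<Rightarrow> (nat \<Rightarrow> complex ^ 'n) \<Rightarrow> nat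
    \<Rightarrow> complex ^ 'n \<Rightarrow> complex ^ 'n" where
  "erasure_op f g i x = cinner x (f i) *s g i"

definition num_radius :: "(complex ^ 'n \<Rightarrow> complex ^ 'n) \<Rightarrow> real" where
  "num_radius T = (SUP x\<in>{x. norm x = 1}. cmod (cinner (T x) x))"

definition AE_Frob :: "real \<Rightarrow> nat \<Rightarrow> (nat \<Rightarrow> complex ^ 'n) \<Rightarrow> (nat \<Rightarrow> complex ^ 'n) \<Rightarrow> real" where
  "AE_Frob p N f g = ((1 / real N) * (\<Sum>i<N. (norm (f i) * norm (g i)) powr p)) powr (1 / p)"

definition AE_NumRad :: "real \<Rightarrow> nat \<Rightarrow> (nat \<Rightarrow> complex ^ 'n) \<Rightarrow> (nat \<Rightarrow> complex ^ 'n) \<Rightarrow> real" where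
  "AE_NumRad p N f g = ((1 / real N) * (\<Sum>i<N. (num_radius (erasure_op f g i)) powr p)) powr (1 / p)"

definition zeta_Frob :: "real \<Rightarrow> nat \<Rightarrow> (nat \<Rightarrow> complex ^ 'n) \<Rightarrow> (nat \<Rightarrow> complex ^ 'n) set" where
  "zeta_Frob p N f = {g. is_dual N f g \<and> (\<forall>h. is_dual N f h \<longrightarrow> AE_Frob p N f g \<le> AE_Frob p N f h)}"

definition zeta_NumRad :: "real \<Rightarrow> nat \<Rightarrow> (nat \<Rightarrow> complex ^ 'n) \<Rightarrow> (nat \<Rightarrow> complex ^ 'n) set" where
  "zeta_NumRad p N f = {g. is_dual N f g \<and> (\<forall>h. is_dual N f h \<longrightarrow> AE_NumRad p N f g \<le> AE_NumRad p N f h)}"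

end

theory Submission imports Defs begin

lemma cinner_add_left: "cinner (x + y) z = cinner x z + cinner y z"
  by (simp add: cinner_def sum.distrib distrib_right)
lemma cinner_add_right: "cinner x (y + z) = cinner x y + cinner x z"
  by (simp add: cinner_def sum.distrib distrib_left)
lemma cinner_scale_left: "cinner (c *s x) z = c * cinner x z"
  by (simp add: cinner_def sum_distrib_left mult.assoc)
lemma cinner_scale_right: "cinner x (c *s z) = cnj c * cinner x z"
  by (simp add: cinner_def sum_distrib_left algebra_simps)
lemma cinner_cnj: "cnj (cinner x y) = cinner y x"
  by (simp add: cinner_def mult.commute)
lemma cinner_axis: "cinner x (axis j 1) = x $ j"
proof -
  have "cinner x (axis j 1) = (\<Sum>k\<in>UNIV. if k = j then x $ k else 0)"
    unfolding cinner_def by (rule sum.cong) (auto simp: axis_def)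
  then show ?thesis by simp
qed

lemma norm_sq_vec: "(norm (x::complex^'n))\<^sup>2 = (\<Sum>j\<in>UNIV. (cmod (x $ j))\<^sup>2)"
  unfolding norm_vec_def L2_set_def by (simp add: sum_nonneg)

lemma cinner_self: "cinner x x = complex_of_real ((norm x)\<^sup>2)"
  unfolding norm_sq_vec cinner_def of_real_sum complex_norm_square by simp

lemma cinner_CS: "cmod (cinner x y) \<le> norm x * norm y"
proof -
  have "cmod (cinner x y) \<le> (\<Sum>j\<in>UNIV. cmod (x $ j * cnj (y $ j)))"
    unfolding cinner_def by (rule norm_sum)
  also have "\<dots> = (\<Sum>j\<in>UNIV. \<bar>cmod (x $ j)\<bar> * \<bar>cmod (y $ j)\<bar>)"
    by (simp add: norm_mult)
  also have "\<dots> \<le> L2_set (\<lambda>j. cmod (x $ j)) UNIV * L2_set (\<lambda>j. cmod (y $ j)) UNIV"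
    by (rule L2_set_mult_ineq)
  finally show ?thesis by (simp add: norm_vec_def)
qed

definition Bf :: "nat \<Rightarrow> (nat \<Rightarrow> complex ^ 'n) \<Rightarrow> complex ^ 'n \<Rightarrow> complex ^ 'n \<Rightarrow> complex" where
  "Bf N f x y = (\<Sum>i<N. cinner x (f i) * cnj (cinner y (f i)))"

lemma tight_frame_op:
  fixes f :: "nat \<Rightarrow> complex ^ 'n"
  assumes A: "\<forall>x. (\<Sum>i<N. (cmod (cinner x (f i)))\<^sup>2) = A * (norm x)\<^sup>2"
  shows "frame_op N f x = of_real A *s x"
proof -
  define C where "C x y = Bf N f x y - of_real A * cinner x y" for x y
  have Cl: "C (x + y) z = C x z + C y z" for x y z
    unfolding C_def Bf_def by (simp add: cinner_add_left sum.distrib algebra_simps)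
  have Cr: "C x (y + z) = C x y + C x z" for x y z
    unfolding C_def Bf_def by (simp add: cinner_add_left cinner_add_right sum.distrib algebra_simps)
  have Csl: "C (c *s x) y = c * C x y" for c x y
    unfolding C_def Bf_def by (simp add: cinner_scale_left sum_distrib_left algebra_simps)
  have Csr: "C x (c *s y) = cnj c * C x y" for c x y
    unfolding C_def Bf_def by (simp add: cinner_scale_left cinner_scale_right sum_distrib_left algebra_simps)
  have C0: "C x x = 0" for x
  proof -
    have "Bf N f x x = of_real (\<Sum>i<N. (cmod (cinner x (f i)))\<^sup>2)"
      unfolding Bf_def of_real_sum complex_norm_square by simp
    also have "\<dots> = of_real A * cinner x x" using A by (simp add: cinner_self)
    finally show ?thesis by (simp add: C_def)
  qed
  have sym: "C x y + C y x = 0" for x y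
  proof -
    have "C (x + y) (x + y) = C x x + C x y + (C y x + C y y)" by (simp add: Cl Cr)
    then show ?thesis by (simp add: C0)
  qed
  have Cz: "C x y = 0" for x y
  proof -
    have "C x (\<i> *s y) + C (\<i> *s y) x = 0" by (rule sym)
    then have "- \<i> * C x y + \<i> * C y x = 0" by (simp add: Csl Csr)
    then have "C y x = C x y" by (simp add: algebra_simps)
    with sym[of x y] show ?thesis by simp
  qed
  show ?thesis
  proof (rule vec_eq_iff[THEN iffD2], rule allI)
    fix j
    have "frame_op N f x $ j = Bf N f x (axis j 1)"
      unfolding frame_op_def Bf_def
      by (simp add: sum_component cinner_cnj cinner_axis)
    also have "\<dots> = of_real A * cinner x (axis j 1)" using Cz[of x "axis j 1"] by (simp add: C_def)
    finally show "frame_op N f x $ j = (of_real A *s x) $ j" by (simp add: cinner_axis)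
  qed
qed

lemma ofreal_scale: "(complex_of_real r *s (v::complex^'n)) = r *\<^sub>R v"
  by (simp add: vec_eq_iff) (simp add: scaleR_conv_of_real)

lemma unit_ex: "\<exists>x::complex^'n. norm x = 1"
  by (rule exI[of _ "axis undefined 1"]) simp

lemma nr_pt:
  assumes "norm x = 1"
  shows "cmod (cinner (erasure_op f h i x) x) \<le> norm (f i) * norm (h i)"
proof -
  have "cmod (cinner (erasure_op f h i x) x) = cmod (cinner x (f i)) * cmod (cinner (h i) x)"
    by (simp add: erasure_op_def cinner_scale_left norm_mult)
  also have "\<dots> \<le> (norm x * norm (f i)) * (norm (h i) * norm x)"
    by (intro mult_mono cinner_CS) auto
  finally show ?thesis using assms by simp
qed

lemma nr_bdd: "bdd_above ((\<lambda>x. cmod (cinner (erasure_op f h i x) x)) ` {x. norm x = 1})"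
  using nr_pt by (auto intro!: bdd_aboveI)

lemma nr_le: "num_radius (erasure_op f h i) \<le> norm (f i) * norm (h i)"
  unfolding num_radius_def using unit_ex nr_pt by (auto intro!: cSUP_least)

lemma nr_ge: "norm x = 1 \<Longrightarrow> cmod (cinner (erasure_op f h i x) x) \<le> num_radius (erasure_op f h i)"
  unfolding num_radius_def by (rule cSUP_upper[OF _ nr_bdd]) simp

lemma nr_nonneg: "0 \<le> num_radius (erasure_op f h i)"
  using unit_ex nr_ge norm_ge_zero order_trans by metis

lemma nr_canon:
  assumes "A > 0"
  shows "num_radius (erasure_op f (\<lambda>i. of_real (1/A) *s f i) i) = norm (f i) * norm (of_real (1/A) *s f i)"
proof (rule antisym[OF nr_le])
  let ?g = "\<lambda>i. of_real (1/A) *s f i"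
  have ng: "norm (?g i) = norm (f i) / A" using assms by (simp only: ofreal_scale norm_scaleR) simp
  show "norm (f i) * norm (?g i) \<le> num_radius (erasure_op f ?g i)"
  proof (cases "f i = 0")
    case True then show ?thesis using nr_nonneg by simp
  next
    case False
    define c where "c = norm (f i)"
    have c: "c > 0" using False by (simp add: c_def)
    define u where "u = of_real (1/c) *s f i"
    have nu: "norm u = 1" using c unfolding u_def by (simp only: ofreal_scale norm_scaleR) (simp add: c_def)
    have ff: "cinner (f i) (f i) = of_real (c^2)" by (simp add: cinner_self c_def)
    have "cinner (erasure_op f ?g i u) u = cinner u (f i) * (of_real (1/A) * cinner (f i) u)"
      by (simp add: erasure_op_def cinner_scale_left)
    also have "\<dots> = of_real (c^2/A)"
      using c by (simp add: u_def cinner_scale_left cinner_scale_right ff power2_eq_square field_simps)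
    finally have "cmod (cinner (erasure_op f ?g i u) u) = c^2 / A" using assms by (simp add: norm_divide norm_power)
    then show ?thesis using nr_ge[OF nu, of f ?g i] ng by (simp add: c_def power2_eq_square)
  qed
qed

theorem proposition4p3:
  fixes N :: nat and f :: "nat \<Rightarrow> complex ^ 'n" and p :: real
  assumes "tight_frame N f"
    and "p > 1"
    and "canonical_dual N f \<in> zeta_NumRad p N f"
  shows "canonical_dual N f \<in> zeta_Frob p N f"
proof -
  obtain A where A0: "A > 0" and A: "\<forall>x. (\<Sum>i<N. (cmod (cinner x (f i)))\<^sup>2) = A * (norm x)\<^sup>2"
    using assms(1) unfolding tight_frame_def by blast
  have S: "frame_op N f x = of_real A *s x" for x using tight_frame_op[OF A] .
  have inj: "inj (frame_op N f)"
    by (rule injI) (use A0 in \<open>simp add: S vec_eq_iff\<close>)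
  have g: "canonical_dual N f = (\<lambda>i. of_real (1/A) *s f i)"
  proof
    fix i
    have "frame_op N f (of_real (1/A) *s f i) = f i" using A0 by (simp add: S vec_eq_iff)
    then show "canonical_dual N f i = of_real (1/A) *s f i"
      unfolding canonical_dual_def by (rule inv_f_eq[OF inj])
  qed
  have dual: "is_dual N f (canonical_dual N f)" and
    minN: "\<And>h. is_dual N f h \<Longrightarrow> AE_NumRad p N f (canonical_dual N f) \<le> AE_NumRad p N f h"
    using assms(3) unfolding zeta_NumRad_def by auto
  have eq: "AE_Frob p N f (canonical_dual N f) = AE_NumRad p N f (canonical_dual N f)"
    by (simp only: AE_Frob_def AE_NumRad_def g nr_canon[OF A0])
  have le: "AE_NumRad p N f h \<le> AE_Frob p N f h" for h
    unfolding AE_Frob_def AE_NumRad_def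
    using assms(2)
    by (intro powr_mono2 mult_left_mono sum_mono sum_nonneg nr_le nr_nonneg mult_nonneg_nonneg) auto
  show ?thesis
    unfolding zeta_Frob_def using dual eq minN le by (auto intro: order_trans)
qed

end
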